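(* Let $P$ be a causal stable system on $\mathcal{L}_{2e+}^n$ that is very strictly passive, i.e., there exist $\nu,\rho>0$ such that $$\langle u,Pu\rangle\ge\nu\|u\|_2^2+\rho\|Pu\|_2^2\quad\forall u\in\mathcal{L}_{2+}.$$ Then $\theta(P)\le\arccos\big(2\sqrt{\nu\rho}\big)<\pi/2$.
   Context: For $n\ge1$, $\mathcal{L}_2^n$ is the set of measurable $u:\mathbb{R}\to\mathbb{R}^n$ with $\|u\|_2^2=\int|u(t)|^2dt<\infty$, inner product $\langle u,v\rangle=\int u(t)^Tv(t)\,dt$; $\mathcal{L}_{2+}=\{u\in\mathcal{L}_2:u(t)=0\ \text{for}\ t<0\}$. For $T\ge0$, $(\Gamma_Tu)(t)=u(t)$ for $t\le T$, $0$ for $t>T$; $\mathcal{L}_{2e+}=\{u:\Gamma_Tu\in\mathcal{L}_{2+}\ \forall T\ge0\}$. A system is an operator $P:\mathcal{L}_{2e+}\to\mathcal{L}_{2e+}$ with $P0=0$, $P\ne0$; causal if $\Gamma_TP=\Gamma_TP\Gamma_T$ for all $T\ge0$; a causal system is stable if $Pu\in\mathcal{L}_{2+}$ for all $u\in\mathcal{L}_{2+}$ and $\sup_{0\ne u\in\mathcal{L}_{2+}}\|Pu\|_2/\|u\|_2<\infty$. The singular angle $\theta(P)\in[0,\pi]$ is given by $\cos\theta(P)=\inf\{\langle u,Pu\rangle/(\|u\|_2\|Pu\|_2):0\neq u\in\mathcal{L}_{2+},\ Pu\ne0\}$. *)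

theory Defs
  imports "HOL-Analysis.Analysis"
begin

type_synonym 'n signal = "real \<Rightarrow> real ^ 'n"

definition L2 :: "'n::finite signal set" where
  "L2 = {u. u \<in> borel_measurable lborel \<and> integrable lborel (\<lambda>t. (norm (u t))\<^sup>2)}"

definition L2p :: "'n::finite signal set" where
  "L2p = {u \<in> L2. \<forall>t<0. u t = 0}"

definition inner2 :: "'n::finite signal \<Rightarrow> 'n signal \<Rightarrow> real" where
  "inner2 u v = integral\<^sup>L lborel (\<lambda>t. u t \<bullet> v t)"

definition norm2 :: "'n::finite signal \<Rightarrow> real" where
  "norm2 u = sqrt (integral\<^sup>L lborel (\<lambda>t. (norm (u t))\<^sup>2))"

definition trunc :: "real \<Rightarrow> 'n::finite signal \<Rightarrow> 'n signal" where
  "trunc T u = (\<lambda>t. if t \<le> T then u t else 0)"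

definition L2ep :: "'n::finite signal set" where
  "L2ep = {u. \<forall>T\<ge>0. trunc T u \<in> L2p}"

definition is_system :: "('n::finite signal \<Rightarrow> 'n signal) \<Rightarrow> bool" where
  "is_system P \<longleftrightarrow> (\<forall>u\<in>L2ep. P u \<in> L2ep) \<and> P (\<lambda>t. 0) = (\<lambda>t. 0) \<and>
     (\<exists>u\<in>L2ep. \<not> (AE t in lborel. P u t = 0))"

definition causal :: "('n::finite signal \<Rightarrow> 'n signal) \<Rightarrow> bool" where
  "causal P \<longleftrightarrow> is_system P \<and>
     (\<forall>T\<ge>0. \<forall>u\<in>L2ep. trunc T (P u) = trunc T (P (trunc T u)))"

definition stable :: "('n::finite signal \<Rightarrow> 'n signal) \<Rightarrow> bool" where
  "stable P \<longleftrightarrow> causal P \<and> (\<forall>u\<in>L2p. P u \<in> L2p) \<and>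
     bdd_above {norm2 (P u) / norm2 u | u. u \<in> L2p \<and> norm2 u \<noteq> 0}"

definition singular_angle :: "('n::finite signal \<Rightarrow> 'n signal) \<Rightarrow> real" where
  "singular_angle P = arccos (Inf {inner2 u (P u) / (norm2 u * norm2 (P u)) | u.
       u \<in> L2p \<and> norm2 u \<noteq> 0 \<and> norm2 (P u) \<noteq> 0})"

end

theory Submission
  imports Defs
begin

lemma L2_meas: "u \<in> L2 \<Longrightarrow> u \<in> borel_measurable lborel"
  by (simp add: L2_def)

lemma L2_int: "u \<in> L2 \<Longrightarrow> integrable lborel (\<lambda>t. (norm (u t))\<^sup>2)"
  by (simp add: L2_def)

lemma norm2_sq: "u \<in> L2 \<Longrightarrow> (norm2 u)\<^sup>2 = integral\<^sup>L lborel (\<lambda>t. (norm (u t))\<^sup>2)"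
  unfolding norm2_def by (simp add: integral_nonneg_AE)

lemma norm2_nonneg: "norm2 u \<ge> 0"
  unfolding norm2_def by simp

lemma norm2_zero:
  assumes "u \<in> L2" "norm2 u = 0"
  shows "AE t in lborel. u t = 0"
proof -
  have "integral\<^sup>L lborel (\<lambda>t. (norm (u t))\<^sup>2) = 0"
    using assms norm2_sq[OF assms(1)] by simp
  then have "AE t in lborel. (norm (u t))\<^sup>2 = 0"
    using integral_nonneg_eq_0_iff_AE[OF L2_int[OF assms(1)]] by simp
  then show ?thesis by simp
qed

lemma inner_integrable:
  assumes "u \<in> L2" "v \<in> L2"
  shows "integrable lborel (\<lambda>t. u t \<bullet> v t)"
proof -
  have 1: "integrable lborel (\<lambda>t. ((norm (u t))\<^sup>2 + (norm (v t))\<^sup>2) / 2)"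
    using L2_int[OF assms(1)] L2_int[OF assms(2)] by simp
  have 2: "(\<lambda>t. u t \<bullet> v t) \<in> borel_measurable lborel"
    using L2_meas[OF assms(1)] L2_meas[OF assms(2)] by measurable
  have 3: "AE t in lborel. norm (u t \<bullet> v t) \<le> norm (((norm (u t))\<^sup>2 + (norm (v t))\<^sup>2) / 2)"
  proof (rule AE_I2)
    fix t
    have "norm (u t \<bullet> v t) \<le> norm (u t) * norm (v t)"
      using Cauchy_Schwarz_ineq2 by simp
    also have "\<dots> \<le> ((norm (u t))\<^sup>2 + (norm (v t))\<^sup>2) / 2"
      using sum_squares_bound[of "norm (u t)" "norm (v t)"] by simp
    finally show "norm (u t \<bullet> v t) \<le> norm (((norm (u t))\<^sup>2 + (norm (v t))\<^sup>2) / 2)"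
      by simp
  qed
  show ?thesis by (rule Bochner_Integration.integrable_bound[OF 1 2 3])
qed

lemma inner_le_s:
  assumes "u \<in> L2" "v \<in> L2" "s > 0"
  shows "2 * inner2 u v \<le> s * (norm2 u)\<^sup>2 + (norm2 v)\<^sup>2 / s"
proof -
  have pw: "2 * (u t \<bullet> v t) \<le> s * (norm (u t))\<^sup>2 + (norm (v t))\<^sup>2 / s" for t
  proof -
    have "0 \<le> (norm (s *\<^sub>R u t - v t))\<^sup>2" by simp
    also have "\<dots> = s^2 * (norm (u t))\<^sup>2 - 2 * s * (u t \<bullet> v t) + (norm (v t))\<^sup>2"
      unfolding power2_norm_eq_inner by (simp add: inner_diff_left inner_diff_right inner_commute algebra_simps power2_eq_square)
    finally have "2 * s * (u t \<bullet> v t) \<le> s^2 * (norm (u t))\<^sup>2 + (norm (v t))\<^sup>2" by simp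
    then have "s * (2 * (u t \<bullet> v t)) \<le> s * (s * (norm (u t))\<^sup>2 + (norm (v t))\<^sup>2 / s)"
      using assms(3) by (simp add: algebra_simps power2_eq_square)
    then show ?thesis using assms(3) by (simp add: mult_le_cancel_left_pos)
  qed
  have "2 * inner2 u v = integral\<^sup>L lborel (\<lambda>t. 2 * (u t \<bullet> v t))"
    unfolding inner2_def by simp
  also have "\<dots> \<le> integral\<^sup>L lborel (\<lambda>t. s * (norm (u t))\<^sup>2 + (norm (v t))\<^sup>2 / s)"
    apply (rule integral_mono)
    using inner_integrable[OF assms(1,2)] L2_int[OF assms(1)] L2_int[OF assms(2)] pw by auto
  also have "\<dots> = s * (norm2 u)\<^sup>2 + (norm2 v)\<^sup>2 / s"
    using L2_int[OF assms(1)] L2_int[OF assms(2)] norm2_sq[OF assms(1)] norm2_sq[OF assms(2)]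
    by simp
  finally show ?thesis .
qed

lemma inner2_zero:
  assumes "AE t in lborel. u t = 0"
  shows "inner2 u v = 0"
proof -
  have "AE t in lborel. u t \<bullet> v t = 0" using assms by (rule eventually_mono) simp
  then show ?thesis unfolding inner2_def by (rule integral_eq_zero_AE)
qed

lemma CS2:
  assumes "u \<in> L2" "v \<in> L2" "norm2 u \<noteq> 0" "norm2 v \<noteq> 0"
  shows "inner2 u v \<le> norm2 u * norm2 v"
proof -
  have a: "norm2 u > 0" "norm2 v > 0" using assms norm2_nonneg[of u] norm2_nonneg[of v] by linarith+
  define s where "s = norm2 v / norm2 u"
  have "s > 0" using a by (simp add: s_def)
  from inner_le_s[OF assms(1,2) this]
  have "2 * inner2 u v \<le> s * (norm2 u)\<^sup>2 + (norm2 v)\<^sup>2 / s" .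
  also have "\<dots> = 2 * (norm2 u * norm2 v)" using a by (simp add: s_def power2_eq_square)
  finally show ?thesis by simp
qed

theorem proposition2:
  fixes P :: "'n::finite signal \<Rightarrow> 'n signal" and \<nu> \<rho> :: real
  assumes "stable P"
    and "\<nu> > 0" and "\<rho> > 0"
    and "\<forall>u\<in>L2p. inner2 u (P u) \<ge> \<nu> * (norm2 u)\<^sup>2 + \<rho> * (norm2 (P u))\<^sup>2"
  shows "singular_angle P \<le> arccos (2 * sqrt (\<nu> * \<rho>)) \<and> arccos (2 * sqrt (\<nu> * \<rho>)) < pi / 2"
proof -
  define c where "c = 2 * sqrt (\<nu> * \<rho>)"
  have c0: "c > 0" using assms(2,3) by (simp add: c_def)
  define S where "S = {inner2 u (P u) / (norm2 u * norm2 (P u)) | u.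
       u \<in> L2p \<and> norm2 u \<noteq> 0 \<and> norm2 (P u) \<noteq> 0}"
  have stab: "\<forall>u\<in>L2p. P u \<in> L2p" using assms(1) unfolding stable_def by blast
  have caus: "causal P" using assms(1) unfolding stable_def by blast
  have sys: "is_system P" using caus unfolding causal_def by blast
  have elem: "c \<le> x \<and> x \<le> 1" if "x \<in> S" for x
  proof -
    obtain u where u: "x = inner2 u (P u) / (norm2 u * norm2 (P u))" "u \<in> L2p"
      "norm2 u \<noteq> 0" "norm2 (P u) \<noteq> 0" using \<open>x \<in> S\<close> unfolding S_def by blast
    have uL: "u \<in> L2" "P u \<in> L2" using u(2) stab unfolding L2p_def by auto
    define a where "a = norm2 u"
    define b where "b = norm2 (P u)"
    have ab: "a > 0" "b > 0" using u norm2_nonneg[of u] norm2_nonneg[of "P u"]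
      unfolding a_def b_def by linarith+
    have hyp: "inner2 u (P u) \<ge> \<nu> * a\<^sup>2 + \<rho> * b\<^sup>2" using assms(4) u(2) unfolding a_def b_def by blast
    have amgm: "\<nu> * a\<^sup>2 + \<rho> * b\<^sup>2 \<ge> c * (a * b)"
    proof -
      have "0 \<le> (sqrt \<nu> * a - sqrt \<rho> * b)\<^sup>2" by simp
      also have "\<dots> = \<nu> * a\<^sup>2 + \<rho> * b\<^sup>2 - c * (a * b)"
        using assms(2,3) by (simp add: c_def power2_eq_square algebra_simps real_sqrt_mult)
      finally show ?thesis by simp
    qed
    have cs: "inner2 u (P u) \<le> a * b" using CS2[OF uL u(3,4)] unfolding a_def b_def .
    have "x = inner2 u (P u) / (a * b)" using u(1) unfolding a_def b_def .
    moreover have "a * b > 0" using ab by simp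
    ultimately show ?thesis using hyp amgm cs
      by (simp add: pos_le_divide_eq pos_divide_le_eq)
  qed
  obtain u where u: "u \<in> L2ep" "\<not> (AE t in lborel. P u t = 0)"
    using sys unfolding is_system_def by blast
  have Pu: "P u \<in> L2ep" using sys u(1) unfolding is_system_def by blast
  obtain T where T: "T \<ge> 0" "\<not> (AE t in lborel. trunc T (P u) t = 0)"
  proof (rule ccontr)
    assume "\<not> thesis"
    have all: "\<forall>n::nat. AE t in lborel. trunc (real n) (P u) t = 0"
    proof
      fix n :: nat
      show "AE t in lborel. trunc (real n) (P u) t = 0"
      proof (rule ccontr)
        assume "\<not> (AE t in lborel. trunc (real n) (P u) t = 0)"
        then show False using that[of "real n"] \<open>\<not> thesis\<close> by simp
      qed
    qed
    then have "AE t in lborel. \<forall>n::nat. trunc (real n) (P u) t = 0" by (simp add: AE_all_countable)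
    then have "AE t in lborel. P u t = 0"
    proof (rule eventually_mono)
      fix t assume elim: "\<forall>n::nat. trunc (real n) (P u) t = 0"
      show "P u t = 0"
      proof (cases "t < 0")
        case True
        have "trunc 0 (P u) \<in> L2p" using Pu unfolding L2ep_def by auto
        then have "trunc 0 (P u) t = 0" using True unfolding L2p_def by auto
        then show ?thesis using True unfolding trunc_def by simp
      next
        case False
        obtain n :: nat where "t \<le> real n" using real_arch_simple by blast
        then show ?thesis using elim[rule_format, of n] unfolding trunc_def by simp
      qed
    qed
    then show False using u(2) by simp
  qed
  define v where "v = trunc T u"
  have vL: "v \<in> L2p" using u(1) T(1) unfolding v_def L2ep_def by auto
  have eq: "trunc T (P u) = trunc T (P v)" using caus T(1) u(1) unfolding causal_def v_def by blast
  have Pv: "\<not> (AE t in lborel. P v t = 0)"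
  proof
    assume "AE t in lborel. P v t = 0"
    then have "AE t in lborel. trunc T (P v) t = 0" by (rule eventually_mono) (simp add: trunc_def)
    then show False using T(2) eq by simp
  qed
  have PvL: "P v \<in> L2" using stab vL unfolding L2p_def by auto
  have vL2: "v \<in> L2" using vL unfolding L2p_def by auto
  have nPv: "norm2 (P v) \<noteq> 0" using norm2_zero[OF PvL] Pv by blast
  have nv: "norm2 v \<noteq> 0"
  proof
    assume "norm2 v = 0"
    then have "inner2 v (P v) = 0" using norm2_zero[OF vL2] inner2_zero by blast
    moreover have "inner2 v (P v) \<ge> \<nu> * (norm2 v)\<^sup>2 + \<rho> * (norm2 (P v))\<^sup>2" using assms(4) vL by blast
    moreover have "\<rho> * (norm2 (P v))\<^sup>2 > 0" using assms(3) nPv by simp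
    ultimately show False using \<open>norm2 v = 0\<close> by simp
  qed
  have ne: "S \<noteq> {}" using vL nv nPv unfolding S_def by blast
  have bdd: "bdd_below S" unfolding bdd_below_def using elem by blast
  have i1: "c \<le> Inf S" using ne elem by (intro cInf_greatest) auto
  obtain x where "x \<in> S" using ne by blast
  have i2: "Inf S \<le> 1" using cInf_lower[OF \<open>x \<in> S\<close> bdd] elem[OF \<open>x \<in> S\<close>] by simp
  have c1: "c \<le> 1" using i1 i2 by simp
  have sa: "singular_angle P = arccos (Inf S)" unfolding singular_angle_def S_def by simp
  have part1: "singular_angle P \<le> arccos c"
    unfolding sa using arccos_le_mono[of "Inf S" c] i1 i2 c0 c1 by simp
  have part2: "arccos c < pi / 2"
    using arccos_less_mono[of c 0] c0 c1 by simp
  show ?thesis using part1 part2 unfolding c_def by simp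
qed

end
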